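(* Let $g\colon(0,1)\to\mathbb{R}$ be a continuous, strictly increasing function such that $g(1-a)=-g(a)$ for all $a\in(0,1)$ and $\lim_{a\to0^+}g(a)=-\infty$, and let $J(a,b)=g^{-1}\bigl(g(a)-g(b)\bigr)$ for $(a,b)\in S=(0,1)\times(0,1)$. If $g$ is continuously differentiable on $(0,1)$ with $g'$ never equal to $0$, then $J$ is differentiable on $S$. Conversely, if $J$ is differentiable on $S$, then $g$ is differentiable on $(0,1)$ and $g'$ is never $0$. *)

theory Defs
  imports "HOL-Analysis.Analysis"
begin

definition J_map :: "(real \<Rightarrow> real) \<Rightarrow> real \<times> real \<Rightarrow> real" where
  "J_map g = (\<lambda>(a, b). inv_into {0<..<1} g (g a - g b))"

end

theory Submission
  imports Defs
begin

locale gsetup =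
  fixes g :: "real \<Rightarrow> real"
  assumes cont: "continuous_on {0<..<1} g"
    and mono: "strict_mono_on {0<..<1} g"
    and symm: "\<forall>a\<in>{0<..<1}. g (1 - a) = - g a"
    and lim0: "filterlim g at_bot (at_right 0)"
begin

abbreviation "\<psi> \<equiv> inv_into {0<..<1} g"

lemma inj: "inj_on g {0<..<1}"
  using mono strict_mono_on_imp_inj_on by blast

lemma less_iff: "x \<in> {0<..<1} \<Longrightarrow> y \<in> {0<..<1} \<Longrightarrow> g x < g y \<longleftrightarrow> x < y"
  using mono by (metis linorder_neq_iff order_less_asym strict_mono_onD)

lemma surj: "g ` {0<..<1} = UNIV"
proof -
  have conn: "connected (g ` {0<..<1})"
    by (intro connected_continuous_image cont) auto
  have "y \<in> g ` {0<..<1}" for y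
  proof -
    have ev: "\<forall>\<^sub>F x in at_right 0. g x < - \<bar>y\<bar> - 1"
      using lim0 unfolding filterlim_at_bot_dense by blast
    have ev2: "\<forall>\<^sub>F x in at_right (0::real). x > 0 \<and> x < 1"
      by (rule eventually_at_rightI[of 0 1]) auto
    have "\<exists>x. g x < - \<bar>y\<bar> - 1 \<and> (x > 0 \<and> x < 1)"
      by (rule eventually_happens'[OF _ eventually_conj[OF ev ev2]]) simp
    then obtain a where a: "a > 0" "a < 1" "g a < - \<bar>y\<bar> - 1"
      by blast
    have "g (1 - a) = - g a" using symm a by auto
    then have ga: "g (1-a) > \<bar>y\<bar> + 1" using a by linarith
    have "g a \<in> g ` {0<..<1}" "g (1-a) \<in> g ` {0<..<1}" using a by auto
    moreover have "g a \<le> y" "y \<le> g (1-a)" using a ga by linarith+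
    ultimately show ?thesis using conn unfolding connected_iff_interval by blast
  qed
  then show ?thesis by auto
qed

lemma psi_in: "\<psi> y \<in> {0<..<1}"
  using surj by (metis UNIV_I inv_into_into)

lemma g_psi[simp]: "g (\<psi> y) = y"
  using surj by (simp add: f_inv_into_f)

lemma psi_g[simp]: "x \<in> {0<..<1} \<Longrightarrow> \<psi> (g x) = x"
  using inj by simp

lemma g_half: "g (1/2) = 0"
  using symm[rule_format, of "1/2"] by auto

lemma psi0: "\<psi> 0 = 1/2"
  using psi_g[of "1/2"] g_half by simp

lemma psi_less: "\<psi> x < \<psi> y \<longleftrightarrow> x < y"
  using less_iff[OF psi_in psi_in] by simp

lemma isCont_g: "x \<in> {0<..<1} \<Longrightarrow> isCont g x"
  using cont continuous_on_eq_continuous_at by (metis open_greaterThanLessThan)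

lemma isCont_psi: "isCont \<psi> y"
proof -
  define x where "x = \<psi> y"
  have x: "x \<in> {0<..<1}" using psi_in x_def by simp
  define d where "d = min x (1-x) / 2"
  have d: "d > 0" using x by (auto simp: d_def)
  have sub: "\<bar>z - x\<bar> \<le> d \<Longrightarrow> z \<in> {0<..<1}" for z
    using x by (auto simp: d_def abs_if split: if_split_asm)
  have "isCont \<psi> (g x)"
    by (rule isCont_inverse_function[OF d]) (use sub isCont_g in auto)
  then show ?thesis by (simp add: x_def)
qed

lemma cont_psi: "continuous_on UNIV \<psi>"
  using isCont_psi continuous_at_imp_continuous_on by blast

lemma J_eq: "J_map g = (\<lambda>p. \<psi> (g (fst p) - g (snd p)))"
  by (auto simp: J_map_def fun_eq_iff split: prod.splits)

lemma J_app[simp]: "J_map g (a, b) = \<psi> (g a - g b)"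
  by (simp add: J_eq)

lemma forward:
  assumes d: "\<forall>x\<in>{0<..<1}. g differentiable (at x)" and nz: "\<forall>x\<in>{0<..<1}. deriv g x \<noteq> 0"
  shows "J_map g differentiable_on ({0<..<1} \<times> {0<..<1})"
proof -
  have dpsi: "\<psi> differentiable (at y)" for y
  proof -
    have x: "\<psi> y \<in> {0<..<1}" by (rule psi_in)
    have "DERIV g (\<psi> y) :> deriv g (\<psi> y)"
      using d x DERIV_deriv_iff_real_differentiable by blast
    then have "DERIV \<psi> y :> inverse (deriv g (\<psi> y))"
      by (rule DERIV_inverse_function[where a="y-1" and b="y+1"]) (use nz x isCont_psi in auto)
    then show ?thesis using real_differentiable_def by blast
  qed
  have dfst: "(\<lambda>p. g (fst p)) differentiable (at p)" if "fst p \<in> {0<..<1}" for p :: "real \<times> real"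
    using differentiable_compose[of g fst p UNIV] d that bounded_linear_fst bounded_linear_imp_differentiable
    by auto
  have dsnd: "(\<lambda>p. g (snd p)) differentiable (at p)" if "snd p \<in> {0<..<1}" for p :: "real \<times> real"
    using differentiable_compose[of g snd p UNIV] d that bounded_linear_snd bounded_linear_imp_differentiable
    by auto
  show ?thesis unfolding differentiable_on_def J_eq
  proof
    fix p :: "real \<times> real" assume p: "p \<in> {0<..<1} \<times> {0<..<1}"
    have "(\<lambda>p. g (fst p) - g (snd p)) differentiable (at p)"
      using dfst dsnd p by (intro differentiable_diff) auto
    then have "(\<lambda>p. \<psi> (g (fst p) - g (snd p))) differentiable (at p)"
      using differentiable_compose[of \<psi>] dpsi by blast
    then show "(\<lambda>p. \<psi> (g (fst p) - g (snd p))) differentiable (at p within {0<..<1} \<times> {0<..<1})"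
      by (rule differentiable_at_withinI)
  qed
qed

context
  assumes Jd: "J_map g differentiable_on ({0<..<1} \<times> {0<..<1})"
begin

lemma partial1:
  assumes x: "x \<in> {0<..<1}" and w: "w \<in> {0<..<1}"
  shows "\<exists>P. ((\<lambda>y. \<psi> (g y - g w)) has_real_derivative P) (at x)"
proof -
  have "J_map g differentiable (at (x, w))"
    using Jd x w by (subst (asm) differentiable_on_eq_differentiable_at) (auto simp: open_Times)
  moreover have "(\<lambda>y. (y, w)) differentiable (at x)"
    by (intro differentiable_Pair differentiable_ident differentiable_const)
  ultimately have "(\<lambda>y. J_map g (y, w)) differentiable (at x)"
    using differentiable_compose[of "J_map g" "\<lambda>y. (y, w)" x UNIV] by simp
  then show ?thesis by (simp add: real_differentiable_def)
qed

lemma transport: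
  assumes x: "x \<in> {0<..<1}" and z: "z \<in> {0<..<1}" and D: "(g has_real_derivative D) (at z)"
  shows "\<exists>P. (g has_real_derivative D * P) (at x)"
proof -
  define w where "w = \<psi> (g x - g z)"
  have w: "w \<in> {0<..<1}" using psi_in w_def by simp
  obtain P where P: "((\<lambda>y. \<psi> (g y - g w)) has_real_derivative P) (at x)"
    using partial1[OF x w] by blast
  have gw: "g w = g x - g z" by (simp add: w_def)
  have "\<psi> (g x - g w) = z" using gw z by simp
  then have "DERIV g (\<psi> (g x - g w)) :> D" using D by simp
  from DERIV_chain2[OF this P] have "((\<lambda>y. g y - g w) has_real_derivative D * P) (at x)"
    by simp
  then have "((\<lambda>y. g y - g w + g w) has_real_derivative D * P + 0) (at x)"
    by (intro DERIV_add DERIV_const)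
  then show ?thesis by auto
qed

lemma main_half: "\<exists>K. (g has_real_derivative K) (at (1/2))"
proof -
  define e :: real where "e = 1/2"
  have e: "e \<in> {0<..<1}" by (simp add: e_def)
  have ge: "g e = 0" unfolding e_def using g_half by simp
  have pe: "\<psi> 0 = e" unfolding e_def using psi0 by simp
  have "\<forall>t. \<exists>P. ((\<lambda>y. \<psi> (g y + t)) has_real_derivative P) (at e)"
  proof
    fix t
    from partial1[OF e psi_in[of "-t"]] show "\<exists>P. ((\<lambda>y. \<psi> (g y + t)) has_real_derivative P) (at e)"
      by simp
  qed
  from choice[OF this] obtain Q where Q0: "\<forall>t. ((\<lambda>y. \<psi> (g y + t)) has_real_derivative Q t) (at e)"
    by blast
  have Q: "((\<lambda>y. \<psi> (g y + t)) has_real_derivative Q t) (at e)" for t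
    using Q0 by blast
  define q where "q h t = (\<psi> (t + h) - \<psi> t) / (\<psi> h - e)" for h t
  have psi_ne: "\<psi> h \<noteq> e" if "h \<noteq> 0" for h
    using that psi_less[of h 0] psi_less[of 0 h] pe by (cases "h < 0") auto
  have flim: "filterlim (\<lambda>h. \<psi> h - e) (at 0) (at 0)"
  proof (rule filterlim_atI)
    have "(\<psi> \<longlongrightarrow> \<psi> 0) (at 0)" using isCont_psi isCont_def by blast
    from tendsto_diff[OF this tendsto_const[of e]]
    show "((\<lambda>h. \<psi> h - e) \<longlongrightarrow> 0) (at 0)" using pe by simp
    show "\<forall>\<^sub>F h in at 0. \<psi> h - e \<noteq> 0"
      using psi_ne by (auto simp: eventually_at intro: exI[of _ 1])
  qed
  have Lq: "((\<lambda>h. q h t) \<longlongrightarrow> Q t) (at 0)" for t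
  proof -
    from Q[of t] have "((\<lambda>k. (\<psi> (g (e + k) + t) - \<psi> (g e + t)) / k) \<longlongrightarrow> Q t) (at 0)"
      by (simp add: DERIV_def)
    from filterlim_compose[OF this flim]
    have "((\<lambda>h. (\<psi> (g (e + (\<psi> h - e)) + t) - \<psi> (g e + t)) / (\<psi> h - e)) \<longlongrightarrow> Q t) (at 0)" .
    then show ?thesis by (simp add: q_def ge add.commute)
  qed
  have q_nonneg: "q h t \<ge> 0" if "h \<noteq> 0" for h t
  proof (cases "h > 0")
    case True
    then have "\<psi> (t + h) > \<psi> t" "\<psi> h > e" using psi_less[of t "t+h"] psi_less[of 0 h] pe by auto
    then show ?thesis by (simp add: q_def)
  next
    case False
    then have "h < 0" using that by simp
    then have "\<psi> (t + h) < \<psi> t" "\<psi> h < e" using psi_less[of "t+h" t] psi_less[of h 0] pe by auto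
    then show ?thesis by (simp add: q_def divide_nonpos_neg)
  qed
  have contq: "continuous_on UNIV (q h)" for h
  proof -
    have qe: "q h = (\<lambda>t. (\<psi> (t + h) - \<psi> t) * (1 / (\<psi> h - e)))"
      by (simp add: q_def fun_eq_iff)
    have "isCont (q h) t" for t
      unfolding qe
      by (intro continuous_intros isCont_o2[OF _ isCont_psi])
    then show ?thesis by (simp add: continuous_at_imp_continuous_on)
  qed
  define E where "E n = {t. \<forall>h. h \<noteq> 0 \<and> \<bar>h\<bar> < 1 / real (Suc n) \<longrightarrow> q h t \<le> real n}" for n
  have closedE: "closed (E n)" for n
  proof -
    have "E n = (\<Inter>h\<in>{h. h \<noteq> 0 \<and> \<bar>h\<bar> < 1 / real (Suc n)}. {t. q h t \<le> real n})"
      by (auto simp: E_def)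
    moreover have "closed {t. q h t \<le> real n}" for h
      by (rule closed_Collect_le[OF contq continuous_on_const])
    ultimately show ?thesis by auto
  qed
  have cover: "\<exists>n. t \<in> E n" for t
  proof -
    have "\<forall>\<^sub>F h in at 0. q h t < Q t + 1" using Lq[of t] by (rule order_tendstoD) simp
    then obtain d where d: "d > 0" "\<And>h. h \<noteq> 0 \<Longrightarrow> dist h 0 < d \<Longrightarrow> q h t < Q t + 1"
      by (auto simp: eventually_at)
    obtain n :: nat where n: "real n \<ge> max (Q t + 1) (1/d)" using real_arch_simple by blast
    have "1 / d < real (Suc n)" using n by simp
    then have "1 < d * real (Suc n)" using d(1) by (simp add: divide_less_eq mult.commute)
    then have nd: "1 / real (Suc n) < d" by (simp add: divide_less_eq mult.commute)
    have "t \<in> E n" unfolding E_def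
    proof (intro CollectI allI impI)
      fix h assume h: "h \<noteq> 0 \<and> \<bar>h\<bar> < 1 / real (Suc n)"
      then have "q h t < Q t + 1" using d(2)[of h] nd by simp
      then show "q h t \<le> real n" using n by simp
    qed
    then show ?thesis by blast
  qed
  obtain n where nE: "interior (E n) \<noteq> {}"
  proof (rule ccontr)
    assume "\<not> thesis"
    then have int0: "interior (E n) = {}" for n using that by blast
    have "UNIV \<subseteq> closure (\<Inter> (range (\<lambda>n. - E n)))"
    proof (rule Baire)
      show "closed (UNIV :: real set)" by simp
      show "countable (range (\<lambda>n. - E n))" by simp
      fix T assume "T \<in> range (\<lambda>n. - E n)"
      then obtain n where T: "T = - E n" by blast
      show "openin (top_of_set UNIV) T \<and> UNIV \<subseteq> closure T"
        using closedE[of n] int0[of n] by (simp add: T closure_complement open_Compl)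
    qed
    moreover have "\<Inter> (range (\<lambda>n. - E n)) = {}" using cover by auto
    ultimately show False by simp
  qed
  then obtain t0 where "t0 \<in> interior (E n)" by blast
  then obtain r where r: "r > 0" "ball t0 r \<subseteq> E n" by (auto simp: mem_interior)
  define t1 where "t1 = t0 - r/2"
  define t2 where "t2 = t0 + r/2"
  have t12: "t1 < t2" using r by (simp add: t1_def t2_def)
  have sub: "{t1..t2} \<subseteq> E n"
  proof
    fix t assume "t \<in> {t1..t2}"
    then have "dist t0 t < r" using r by (auto simp: t1_def t2_def dist_real_def abs_if)
    then show "t \<in> E n" using r by auto
  qed
  define \<delta> where "\<delta> = 1 / real (Suc n)"
  have \<delta>: "\<delta> > 0" by (simp add: \<delta>_def)
  define I where "I h = integral {t1..t2} (q h)" for h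
  have intq: "q h integrable_on {t1..t2}" for h
    by (rule integrable_continuous_interval, rule continuous_on_subset[OF contq]) simp
  have LI: "(I \<longlongrightarrow> integral {t1..t2} Q) (at 0)"
  proof -
    have "(I \<longlongrightarrow> integral {t1..t2} Q) (at 0 within ball 0 \<delta>)"
      unfolding tendsto_at_iff_sequentially
    proof (intro allI impI)
      fix X :: "nat \<Rightarrow> real"
      assume X: "\<forall>i. X i \<in> ball 0 \<delta> - {0}" and X0: "X \<longlonglongrightarrow> 0"
      have Xne: "\<forall>k. X k \<noteq> 0" using X by auto
      have fX: "filterlim X (at 0) sequentially"
        unfolding filterlim_at using Xne X0 by (simp add: always_eventually)
      have "(\<lambda>k. integral {t1..t2} (q (X k))) \<longlonglongrightarrow> integral {t1..t2} Q"
      proof (rule dominated_convergence(2)[where h="\<lambda>_. real n"])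
        show "q (X k) integrable_on {t1..t2}" for k by (rule intq)
        show "(\<lambda>_. real n) integrable_on {t1..t2}" by (intro integrable_continuous_interval continuous_on_const)
        show "norm (q (X k) t) \<le> real n" if "t \<in> {t1..t2}" for k t
        proof -
          have "X k \<noteq> 0" "\<bar>X k\<bar> < \<delta>" using X[rule_format, of k] by auto
          moreover have "t \<in> E n" using sub that by blast
          ultimately have "q (X k) t \<le> real n" unfolding E_def \<delta>_def by simp
          moreover have "q (X k) t \<ge> 0" using q_nonneg \<open>X k \<noteq> 0\<close> by blast
          ultimately show ?thesis by simp
        qed
        show "(\<lambda>k. q (X k) t) \<longlonglongrightarrow> Q t" if "t \<in> {t1..t2}" for t
          using filterlim_compose[OF Lq[of t] fX] .
      qed
      then show "(I \<circ> X) \<longlonglongrightarrow> integral {t1..t2} Q" by (simp add: I_def o_def)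
    qed
    moreover have "at (0::real) within ball 0 \<delta> = at 0" by (rule at_within_open) (use \<delta> in auto)
    ultimately show ?thesis by simp
  qed
  define A where "A h = integral {t1..t2} (\<lambda>t. \<psi> (t + h) - \<psi> t)" for h
  define a0 where "a0 = t1 - 1"
  define \<Psi> where "\<Psi> x = integral {a0..x} \<psi>" for x
  have intpsi: "\<psi> integrable_on {a..b}" for a b
    by (rule integrable_continuous_interval, rule continuous_on_subset[OF cont_psi]) simp
  have shift: "((\<lambda>t. \<psi> (t + h)) has_integral integral {t1+h..t2+h} \<psi>) {t1..t2}" for h
  proof -
    have "(\<psi> has_integral integral {t1+h..t2+h} \<psi>) (cbox (t1+h) (t2+h))"
      using intpsi by (simp add: integrable_integral)
    from has_integral_affinity'[OF this, of 1 h]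
    show ?thesis by simp
  qed
  have Aeq: "A h = (\<Psi> (t2 + h) - \<Psi> t2) - (\<Psi> (t1 + h) - \<Psi> t1)" if "\<bar>h\<bar> < 1" for h
  proof -
    have "((\<lambda>t. \<psi> (t + h) - \<psi> t) has_integral (integral {t1+h..t2+h} \<psi> - integral {t1..t2} \<psi>)) {t1..t2}"
      by (intro has_integral_diff shift integrable_integral intpsi)
    then have a: "A h = integral {t1+h..t2+h} \<psi> - integral {t1..t2} \<psi>"
      unfolding A_def by (rule integral_unique)
    have c1: "\<Psi> (t1+h) + integral {t1+h..t2+h} \<psi> = \<Psi> (t2+h)"
      unfolding \<Psi>_def by (rule Henstock_Kurzweil_Integration.integral_combine) (use that t12 intpsi in \<open>auto simp: a0_def\<close>)
    have c2: "\<Psi> t1 + integral {t1..t2} \<psi> = \<Psi> t2"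
      unfolding \<Psi>_def by (rule Henstock_Kurzweil_Integration.integral_combine) (use that t12 intpsi in \<open>auto simp: a0_def\<close>)
    show ?thesis using a c1 c2 by linarith
  qed
  have dPsi: "(\<Psi> has_real_derivative \<psi> x) (at x)" if "a0 < x" for x
  proof -
    have "(\<Psi> has_real_derivative \<psi> x) (at x within {a0..x+1})"
      unfolding \<Psi>_def
      by (rule integral_has_real_derivative, rule continuous_on_subset[OF cont_psi]) (use that in auto)
    then show ?thesis using that by (simp add: at_within_Icc_at)
  qed
  have LA: "((\<lambda>h. A h / h) \<longlongrightarrow> \<psi> t2 - \<psi> t1) (at 0)"
  proof -
    have l2: "((\<lambda>h. (\<Psi> (t2 + h) - \<Psi> t2) / h) \<longlongrightarrow> \<psi> t2) (at 0)"
      using dPsi[of t2] t12 by (simp add: DERIV_def a0_def)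
    have l1: "((\<lambda>h. (\<Psi> (t1 + h) - \<Psi> t1) / h) \<longlongrightarrow> \<psi> t1) (at 0)"
      using dPsi[of t1] by (simp add: DERIV_def a0_def)
    have "((\<lambda>h. (\<Psi> (t2 + h) - \<Psi> t2) / h - (\<Psi> (t1 + h) - \<Psi> t1) / h) \<longlongrightarrow> \<psi> t2 - \<psi> t1) (at 0)"
      by (rule tendsto_diff[OF l2 l1])
    moreover have "\<forall>\<^sub>F h in at 0. (\<Psi> (t2 + h) - \<Psi> t2) / h - (\<Psi> (t1 + h) - \<Psi> t1) / h = A h / h"
      unfolding eventually_at
      by (rule exI[of _ 1]) (auto simp: Aeq diff_divide_distrib)
    ultimately show ?thesis by (rule Lim_transform_eventually)
  qed
  have AI: "A h = I h * (\<psi> h - e)" if "h \<noteq> 0" for h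
  proof -
    have "((\<lambda>t. q h t * (\<psi> h - e)) has_integral I h * (\<psi> h - e)) {t1..t2}"
      unfolding I_def by (rule has_integral_mult_left) (rule integrable_integral[OF intq])
    moreover have "(\<lambda>t. q h t * (\<psi> h - e)) = (\<lambda>t. \<psi> (t + h) - \<psi> t)"
      using psi_ne[OF that] by (simp add: q_def fun_eq_iff)
    ultimately show ?thesis unfolding A_def by (simp add: integral_unique)
  qed
  define K where "K = integral {t1..t2} Q / (\<psi> t2 - \<psi> t1)"
  have pt: "\<psi> t2 - \<psi> t1 \<noteq> 0" using psi_less[of t1 t2] t12 by simp
  have L2: "((\<lambda>h. h / (\<psi> h - e)) \<longlongrightarrow> K) (at 0)"
  proof -
    have "((\<lambda>h. I h / (A h / h)) \<longlongrightarrow> K) (at 0)" unfolding K_def by (rule tendsto_divide[OF LI LA pt])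
    moreover have "\<forall>\<^sub>F h in at 0. I h / (A h / h) = h / (\<psi> h - e)"
    proof -
      have "\<forall>\<^sub>F h in at 0. A h / h \<noteq> 0" by (rule tendsto_imp_eventually_ne[OF LA pt])
      moreover have "\<forall>\<^sub>F h in at (0::real). h \<noteq> 0" by (auto simp: eventually_at intro: exI[of _ 1])
      ultimately show ?thesis
      proof eventually_elim
        case (elim h)
        then have "A h \<noteq> 0" by auto
        then have "I h \<noteq> 0" using AI[OF elim(2)] by auto
        then show ?case unfolding AI[OF elim(2)] using psi_ne[OF elim(2)] elim(2) by (simp add: field_simps)
      qed
    qed
    ultimately show ?thesis by (rule Lim_transform_eventually)
  qed
  have fg: "filterlim g (at 0) (at e)"
  proof (rule filterlim_atI)
    show "(g \<longlongrightarrow> 0) (at e)" using isCont_g[OF e] ge isCont_def by metis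
    have "\<forall>\<^sub>F y in at e. y \<in> {0<..<1} - {e}" by (rule eventually_at_in_open) (use e in auto)
    then show "\<forall>\<^sub>F y in at e. g y \<noteq> 0"
    proof eventually_elim
      case (elim y)
      then have y: "y \<in> {0<..<1}" "y \<noteq> e" by auto
      show "g y \<noteq> 0" using inj_on_eq_iff[OF inj y(1) e] y(2) ge by simp
    qed
  qed
  have "((\<lambda>y. g y / (\<psi> (g y) - e)) \<longlongrightarrow> K) (at e)" using filterlim_compose[OF L2 fg] .
  moreover have "\<forall>\<^sub>F y in at e. g y / (\<psi> (g y) - e) = (g y - g e) / (y - e)"
    using eventually_at_in_open'[of "{0<..<1}" e] e by (auto elim!: eventually_mono simp: ge)
  ultimately have "((\<lambda>y. (g y - g e) / (y - e)) \<longlongrightarrow> K) (at e)" by (rule Lim_transform_eventually)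
  then have "(g has_real_derivative K) (at e)" by (simp add: has_field_derivative_iff)
  then show ?thesis by (auto simp: e_def)
qed

lemma converse: "(\<forall>x\<in>{0<..<1}. g differentiable (at x)) \<and> (\<forall>x\<in>{0<..<1}. deriv g x \<noteq> 0)"
proof -
  obtain K where K: "(g has_real_derivative K) (at (1/2))" using main_half by blast
  have half: "(1/2::real) \<in> {0<..<1}" by simp
  have dall: "\<exists>D. (g has_real_derivative D) (at x)" if "x \<in> {0<..<1}" for x
    using transport[OF that half K] by blast
  have diff: "\<forall>x\<in>{0<..<1}. g differentiable (at x)"
    using dall real_differentiable_def by blast
  moreover have "deriv g x \<noteq> 0" if x: "x \<in> {0<..<1}" for x
  proof
    assume d0: "deriv g x = 0"
    obtain D where D: "(g has_real_derivative D) (at x)" using dall x by blast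
    then have "D = 0" using d0 DERIV_imp_deriv by fastforce
    with D transport[OF half x] obtain P where "(g has_real_derivative 0 * P) (at (1/2))" by blast
    then have z: "(g has_real_derivative 0) (at (1/2))" by simp
    have "(g has_real_derivative 0) (at y)" if "y \<in> {0<..<1}" for y
      using transport[OF that half z] by auto
    then have "\<exists>c. \<forall>y\<in>{0<..<1}. g y = c"
      by (intro has_field_derivative_zero_constant) (auto intro: has_field_derivative_at_within)
    then obtain c where c: "\<forall>y\<in>{0<..<1}. g y = c" by blast
    have "g (1/4) < g (3/4)" using less_iff[of "1/4" "3/4"] by simp
    then show False using c by simp
  qed
  ultimately show ?thesis by blast
qed

end

end

theorem proposition5p7:
  fixes g :: "real \<Rightarrow> real"
  assumes cont: "continuous_on {0<..<1} g"
    and mono: "strict_mono_on {0<..<1} g"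
    and symm: "\<forall>a\<in>{0<..<1}. g (1 - a) = - g a"
    and lim0: "filterlim g at_bot (at_right 0)"
  shows "((\<forall>x\<in>{0<..<1}. g differentiable (at x)) \<and> continuous_on {0<..<1} (deriv g)
            \<and> (\<forall>x\<in>{0<..<1}. deriv g x \<noteq> 0)
          \<longrightarrow> J_map g differentiable_on ({0<..<1} \<times> {0<..<1}))
       \<and> (J_map g differentiable_on ({0<..<1} \<times> {0<..<1})
          \<longrightarrow> (\<forall>x\<in>{0<..<1}. g differentiable (at x)) \<and> (\<forall>x\<in>{0<..<1}. deriv g x \<noteq> 0))"
proof -
  interpret gsetup g by unfold_locales (rule assms)+
  show ?thesis using forward converse by blast
qed

end
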